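(* Consider the agents $$\dot x_i=\sum_{j=1}^N\alpha_{ij}(t)(y_j-y_i),\qquad y_i=\mathrm{sat}(x_i),\qquad i\in\mathcal V=\{1,\dots,N\},$$ with a common saturation level $s>0$ (homogeneous agents), and time-varying undirected weights satisfying the standing assumptions below. Then for every $i\in\mathcal V$ there exists $x_i^*$ with $\lim_{t\to\infty}x_i(t)=x_i^*$, and $x_i^*\in[\min_{j\in\mathcal V}x_j(t_0),\ \max_{j\in\mathcal V}x_j(t_0)]$.
   Context: $\mathrm{sat}(x)=\mathrm{sign}(x)\min\{|x|,s\}$. Standing assumptions on the time-varying graph: $\alpha_{ij}(t)=\alpha_{ji}(t)\ge0$ for all $t\ge0$, and each $\alpha_{ij}$ is continuous on $[0,\infty)$ except on a set of measure zero; solutions are Carathéodory solutions, i.e. absolutely continuous functions satisfying $x_i(t)=x_i(t_0)+\int_{t_0}^t\sum_j\alpha_{ij}(\tau)(y_j(\tau)-y_i(\tau))\,d\tau$. *)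

theory Defs
  imports "HOL-Analysis.Analysis"
begin

definition sat :: "real \<Rightarrow> real \<Rightarrow> real" where
  "sat s x = sgn x * min \<bar>x\<bar> s"

end

theory Submission
  imports Defs
begin


lemma lborel_to_HK:
  fixes f :: "real \<Rightarrow> real"
  assumes "set_integrable lborel S f"
  shows "f absolutely_integrable_on S" and "(LINT x:S|lborel. f x) = integral S f"
proof -
  have i: "integrable lborel (\<lambda>x. indicator S x *\<^sub>R f x)" using assms by (simp add: set_integrable_def)
  have m: "(\<lambda>x. indicator S x *\<^sub>R f x) \<in> borel_measurable lborel" using i by (rule borel_measurable_integrable)
  have "integrable lebesgue (\<lambda>x. indicator S x *\<^sub>R f x)" using i integrable_completion[OF m] by simp
  then show 1: "f absolutely_integrable_on S" by (simp add: set_integrable_def)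
  have "(LINT x:S|lborel. f x) = (LINT x:S|lebesgue. f x)"
    unfolding set_lebesgue_integral_def using integral_completion[OF m] by simp
  also have "\<dots> = integral S f" using set_lebesgue_integral_eq_integral(2)[OF 1] .
  finally show "(LINT x:S|lborel. f x) = integral S f" .
qed

lemma sat_mono: "s \<ge> 0 \<Longrightarrow> u \<le> v \<Longrightarrow> sat s u \<le> sat s v"
  by (auto simp: sat_def sgn_if min_def)

lemma sym_sum_le:
  fixes a :: "nat \<Rightarrow> nat \<Rightarrow> real" and D Y :: "nat \<Rightarrow> real"
  assumes "finite I" and "\<And>i j. i \<in> I \<Longrightarrow> j \<in> I \<Longrightarrow> a i j = a j i \<and> a i j \<ge> 0"
    and "\<And>i j. i \<in> I \<Longrightarrow> j \<in> I \<Longrightarrow> (D i - D j) * (Y i - Y j) \<ge> 0"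
  shows "(\<Sum>i\<in>I. D i * (\<Sum>j\<in>I. a i j * (Y j - Y i))) \<le> 0"
proof -
  let ?S = "\<Sum>i\<in>I. \<Sum>j\<in>I. a i j * D i * (Y j - Y i)"
  have e1: "(\<Sum>i\<in>I. D i * (\<Sum>j\<in>I. a i j * (Y j - Y i))) = ?S"
    by (simp add: sum_distrib_left algebra_simps)
  have "?S = (\<Sum>j\<in>I. \<Sum>i\<in>I. a i j * D i * (Y j - Y i))" by (rule sum.swap)
  also have "\<dots> = (\<Sum>i\<in>I. \<Sum>j\<in>I. a i j * D j * (Y i - Y j))"
    using assms(2) by (intro sum.cong refl) auto
  finally have e2: "?S = \<dots>" .
  have "2 * ?S = (\<Sum>i\<in>I. \<Sum>j\<in>I. a i j * D i * (Y j - Y i) + a i j * D j * (Y i - Y j))"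
    using e2 by (simp add: sum.distrib)
  also have "\<dots> = (\<Sum>i\<in>I. \<Sum>j\<in>I. - (a i j * ((D i - D j) * (Y i - Y j))))"
    by (intro sum.cong refl) (simp add: algebra_simps)
  also have "\<dots> \<le> 0"
    using assms(2,3) by (intro sum_nonpos) (simp add: mult_nonneg_nonneg)
  finally show ?thesis using e1 by simp
qed

definition hub :: "real \<Rightarrow> real \<Rightarrow> real" where
  "hub e z = (if z \<le> 0 then 0 else if z \<le> e then z\<^sup>2 / (2*e) else z - e/2)"
definition hd :: "real \<Rightarrow> real \<Rightarrow> real" where
  "hd e z = (if z \<le> 0 then 0 else if z \<le> e then z / e else 1)"

lemma hd_mono: "e > 0 \<Longrightarrow> u \<le> v \<Longrightarrow> hd e u \<le> hd e v"
  by (auto simp: hd_def divide_simps)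

lemma hd_lip: "e > 0 \<Longrightarrow> \<bar>hd e u - hd e v\<bar> \<le> (1/e) * \<bar>u - v\<bar>"
  by (auto simp: hd_def divide_simps abs_if)

lemma hub_conv: assumes "e > 0" shows "hub e v - hub e u \<le> hd e v * (v - u)"
proof -
  have sq: "0 \<le> (v-u)\<^sup>2" by simp
  consider "v \<le> 0" | "0 < v" "v \<le> e" | "e < v" by linarith
  then consider "v \<le> 0" "u \<le> 0" | "v \<le> 0" "0 < u" "u \<le> e" | "v \<le> 0" "e < u"
    | "0 < v" "v \<le> e" "u \<le> 0" | "0 < v" "v \<le> e" "0 < u" "u \<le> e" | "0 < v" "v \<le> e" "e < u"
    | "e < v" "u \<le> 0" | "e < v" "0 < u" "u \<le> e" | "e < v" "e < u" by linarith
  then show ?thesis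
  proof cases
    case 1 then show ?thesis by (simp add: hub_def hd_def)
  next
    case 2 then show ?thesis using assms by (simp add: hub_def hd_def)
  next
    case 3 then show ?thesis using assms by (simp add: hub_def hd_def)
  next
    case 4 then show ?thesis using assms by (simp add: hub_def hd_def divide_simps power2_eq_square)
  next
    case 5
    have k: "e * (u * (v * 2)) \<le> e * (u * u + v * v)" using sq assms by (intro mult_left_mono) (auto simp: power2_eq_square algebra_simps)
    then show ?thesis using 5 assms sq by (simp add: hub_def hd_def divide_simps power2_eq_square algebra_simps)
  next
    case 6
    have k: "0 \<le> e * ((e - v) * (2 * u - v - e))" using 6 by (intro mult_nonneg_nonneg) auto
    then show ?thesis using 6 assms by (simp add: hub_def hd_def divide_simps power2_eq_square algebra_simps)
  next
    case 7 then show ?thesis using assms by (simp add: hub_def hd_def)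
  next
    case 8
    have k: "0 \<le> (e - u) * (e - u)" by simp
    then show ?thesis using 8 assms by (simp add: hub_def hd_def divide_simps power2_eq_square algebra_simps)
  next
    case 9 then show ?thesis using assms by (simp add: hub_def hd_def)
  qed
qed

lemma hub_pos: assumes "e > 0" shows "hub e z \<le> max z 0 \<and> max z 0 \<le> hub e z + e/2"
proof -
  consider "z \<le> 0" | "0 < z" "z \<le> e" | "e < z" by linarith
  then show ?thesis
  proof cases
    case 1 then show ?thesis using assms by (simp add: hub_def)
  next
    case 2
    have a: "z * z \<le> e * z" using 2 by (simp add: mult_right_mono)
    have b: "0 \<le> (e - z) * (e - z)" by simp
    show ?thesis using 2 assms a b by (simp add: hub_def divide_simps power2_eq_square algebra_simps)
  next
    case 3 then show ?thesis using assms by (simp add: hub_def)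
  qed
qed



lemma bisect:
  fixes h w :: "real \<Rightarrow> real"
  assumes wi: "\<And>t. t \<ge> t0 \<Longrightarrow> w integrable_on {t0..t}"
    and wn: "\<And>t. w t \<ge> 0" and C: "C \<ge> 0"
    and step: "\<And>a b. t0 \<le> a \<Longrightarrow> a \<le> b \<Longrightarrow> h b - h a \<le> C * (integral {a..b} w)\<^sup>2"
    and ab: "t0 \<le> a" "a \<le> b"
  shows "h b \<le> h a"
proof -
  have wab: "w integrable_on {a..b}" if "t0 \<le> a" "a \<le> b" for a b
    using integrable_on_subinterval[OF wi[of b]] that by auto
  have claim: "h b - h a \<le> C * (integral {a..b} w)\<^sup>2 / 2^n" if "t0 \<le> a" "a \<le> b" for n a b
    using that
  proof (induction n arbitrary: a b)
    case 0 then show ?case using step by simp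
  next
    case (Suc n)
    let ?mu = "integral {a..b} w"
    have cont: "continuous_on {a..b} (\<lambda>m. integral {a..m} w)"
      using wab Suc.prems by (intro indefinite_integral_continuous_1) auto
    have mu0: "?mu \<ge> 0" using wab[OF Suc.prems] wn by (intro integral_nonneg) auto
    have "\<exists>m\<ge>a. m \<le> b \<and> integral {a..m} w = ?mu / 2"
      using mu0 Suc.prems cont by (intro IVT') auto
    then obtain m where m: "a \<le> m" "m \<le> b" "integral {a..m} w = ?mu / 2" by blast
    have "integral {a..m} w + integral {m..b} w = ?mu"
      using Henstock_Kurzweil_Integration.integral_combine[OF m(1,2) wab[OF Suc.prems]] .
    then have m2: "integral {m..b} w = ?mu / 2" using m by simp
    have "h m - h a \<le> C * (?mu/2)\<^sup>2 / 2^n" using Suc.IH[of a m] m Suc.prems by simp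
    moreover have "h b - h m \<le> C * (?mu/2)\<^sup>2 / 2^n" using Suc.IH[of m b] m m2 Suc.prems by simp
    ultimately have "h b - h a \<le> 2 * (C * (?mu/2)\<^sup>2 / 2^n)" by simp
    also have "\<dots> = C * ?mu\<^sup>2 / 2 ^ Suc n" by (simp add: power2_eq_square field_simps)
    finally show ?case .
  qed
  show ?thesis
  proof (rule ccontr)
    assume "\<not> h b \<le> h a"
    then have pos: "h b - h a > 0" by simp
    let ?X = "C * (integral {a..b} w)\<^sup>2"
    have X0: "?X \<ge> 0" using C by simp
    obtain n where n: "?X / (h b - h a) < 2 ^ n" using real_arch_pow[of 2 "?X / (h b - h a)"] by auto
    have "?X / 2^n < h b - h a" using n pos by (simp add: field_simps)
    then show False using claim[OF ab, of n] by simp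
  qed
qed

lemma conv_crit:
  fixes f :: "real \<Rightarrow> real"
  assumes bnd: "\<And>t. t \<ge> t0 \<Longrightarrow> lo \<le> f t \<and> f t \<le> hi"
    and nosc: "\<And>p q. p < q \<Longrightarrow> (\<forall>T. \<exists>t\<ge>T. f t < p) \<Longrightarrow> (\<forall>T. \<exists>t\<ge>T. f t > q) \<Longrightarrow> False"
  shows "\<exists>l. (f \<longlongrightarrow> l) at_top"
proof -
  define S where "S = {c. \<exists>T. \<forall>t\<ge>T. f t \<le> c}"
  have hiS: "hi \<in> S" using bnd unfolding S_def by auto
  have bdd: "bdd_below S" unfolding S_def bdd_below_def
  proof (intro exI[of _ lo] ballI)
    fix c assume "c \<in> {c. \<exists>T. \<forall>t\<ge>T. f t \<le> c}"
    then obtain T where "\<forall>t\<ge>T. f t \<le> c" by auto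
    then have "f (max T t0) \<le> c" by simp
    moreover have "lo \<le> f (max T t0)" using bnd[of "max T t0"] by simp
    ultimately show "lo \<le> c" by simp
  qed
  define l where "l = Inf S"
  have "(f \<longlongrightarrow> l) at_top"
  proof (rule order_tendstoI)
    fix a assume "l < a"
    then obtain c where "c \<in> S" "c < a" using cInf_lessD[of S a] hiS unfolding l_def by auto
    then obtain T where "\<forall>t\<ge>T. f t \<le> c" unfolding S_def by auto
    then have "\<forall>t\<ge>T. f t < a" using \<open>c < a\<close> by (meson le_less_trans)
    then show "eventually (\<lambda>t. f t < a) at_top" unfolding eventually_at_top_linorder by blast
  next
    fix a assume al: "a < l"
    show "eventually (\<lambda>t. a < f t) at_top"
    proof (rule ccontr)
      assume "\<not> eventually (\<lambda>t. a < f t) at_top"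
      then have fr: "\<forall>T. \<exists>t\<ge>T. f t \<le> a" unfolding eventually_at_top_linorder by (auto simp: not_less)
      define p where "p = (a + l) / 2"
      define q where "q = (p + l) / 2"
      have pq: "p < q" "q < l" "a < p" using al unfolding p_def q_def by auto
      have "q \<notin> S"
      proof
        assume "q \<in> S"
        then have "l \<le> q" unfolding l_def using bdd by (rule cInf_lower)
        then show False using pq by simp
      qed
      then have fq: "\<forall>T. \<exists>t\<ge>T. f t > q" unfolding S_def by (auto simp: not_le)
      have fp: "\<forall>T. \<exists>t\<ge>T. f t < p" using fr pq by (meson le_less_trans)
      show False using nosc[OF pq(1) fp fq] .
    qed
  qed
  then show ?thesis by blast
qed

lemma mono_conv:
  fixes f :: "real \<Rightarrow> real"
  assumes mono: "\<And>a b. t0 \<le> a \<Longrightarrow> a \<le> b \<Longrightarrow> f b \<le> f a"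
    and nn: "\<And>t. t \<ge> t0 \<Longrightarrow> f t \<ge> 0"
  shows "\<exists>L. (f \<longlongrightarrow> L) at_top"
proof -
  define L where "L = Inf (f ` {t0..})"
  have bdd: "bdd_below (f ` {t0..})" using nn by (auto simp: bdd_below_def)
  have "(f \<longlongrightarrow> L) at_top"
  proof (rule order_tendstoI)
    fix a assume "a < L"
    have "\<forall>t\<ge>t0. a < f t"
    proof (intro allI impI)
      fix t assume "t \<ge> t0"
      then have "L \<le> f t" unfolding L_def by (intro cInf_lower[OF _ bdd]) auto
      then show "a < f t" using \<open>a < L\<close> by simp
    qed
    then show "eventually (\<lambda>t. a < f t) at_top" unfolding eventually_at_top_linorder by blast
  next
    fix a assume "L < a"
    then obtain y where "y \<in> f ` {t0..}" "y < a" using cInf_lessD[of "f ` {t0..}" a] unfolding L_def by auto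
    then obtain t1 where t1: "t1 \<ge> t0" "f t1 < a" by auto
    have "\<forall>t\<ge>t1. f t < a" using mono t1 by (meson le_less_trans)
    then show "eventually (\<lambda>t. f t < a) at_top" unfolding eventually_at_top_linorder by blast
  qed
  then show ?thesis by blast
qed




locale sys =
  fixes N :: nat and s t0 :: real and \<alpha> :: "nat \<Rightarrow> nat \<Rightarrow> real \<Rightarrow> real"
    and x :: "nat \<Rightarrow> real \<Rightarrow> real"
  assumes spos: "s > 0" and t0: "t0 \<ge> 0"
    and sym: "\<And>i j t. i \<in> {1..N} \<Longrightarrow> j \<in> {1..N} \<Longrightarrow> t \<ge> 0 \<Longrightarrow> \<alpha> i j t = \<alpha> j i t \<and> \<alpha> i j t \<ge> 0"
    and integ: "\<And>i t. i \<in> {1..N} \<Longrightarrow> t \<ge> t0 \<Longrightarrow>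
       (\<lambda>\<tau>. \<Sum>j=1..N. \<alpha> i j \<tau> * (sat s (x j \<tau>) - sat s (x i \<tau>))) absolutely_integrable_on {t0..t}"
    and eq: "\<And>i t. i \<in> {1..N} \<Longrightarrow> t \<ge> t0 \<Longrightarrow>
       x i t = x i t0 + integral {t0..t} (\<lambda>\<tau>. \<Sum>j=1..N. \<alpha> i j \<tau> * (sat s (x j \<tau>) - sat s (x i \<tau>)))"
begin

definition g where "g i \<tau> = (\<Sum>j=1..N. \<alpha> i j \<tau> * (sat s (x j \<tau>) - sat s (x i \<tau>)))"

lemma g_eq: "g i = (\<lambda>\<tau>. \<Sum>j=1..N. \<alpha> i j \<tau> * (sat s (x j \<tau>) - sat s (x i \<tau>)))"
  by (simp add: g_def[abs_def])

lemma gabs: "i \<in> {1..N} \<Longrightarrow> t0 \<le> a \<Longrightarrow> a \<le> b \<Longrightarrow> g i absolutely_integrable_on {a..b}"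
  using absolutely_integrable_on_subinterval[OF integ[of i b]] unfolding g_eq by auto

lemma gI: "i \<in> {1..N} \<Longrightarrow> t0 \<le> a \<Longrightarrow> a \<le> b \<Longrightarrow> g i integrable_on {a..b}"
  using gabs set_lebesgue_integral_eq_integral(1) by blast

lemma gabsI: "i \<in> {1..N} \<Longrightarrow> t0 \<le> a \<Longrightarrow> a \<le> b \<Longrightarrow> (\<lambda>\<tau>. \<bar>g i \<tau>\<bar>) integrable_on {a..b}"
  using gabs set_integrable_abs set_lebesgue_integral_eq_integral(1) by blast

definition w where "w \<tau> = (\<Sum>i\<in>{1..N}. \<bar>g i \<tau>\<bar>)"

lemma w_nonneg: "w \<tau> \<ge> 0" unfolding w_def by (intro sum_nonneg) auto

lemma wI: "t0 \<le> a \<Longrightarrow> a \<le> b \<Longrightarrow> w integrable_on {a..b}"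
proof -
  assume "t0 \<le> a" "a \<le> b"
  then have "(\<lambda>\<tau>. \<Sum>i\<in>{1..N}. \<bar>g i \<tau>\<bar>) integrable_on {a..b}"
    by (intro Henstock_Kurzweil_Integration.integrable_sum gabsI) auto
  then show ?thesis unfolding w_def[abs_def] .
qed

lemma incr: "i \<in> {1..N} \<Longrightarrow> t0 \<le> a \<Longrightarrow> a \<le> b \<Longrightarrow> x i b - x i a = integral {a..b} (g i)"
proof -
  assume i: "i \<in> {1..N}" and ab: "t0 \<le> a" "a \<le> b"
  have "integral {t0..a} (g i) + integral {a..b} (g i) = integral {t0..b} (g i)"
  proof -
    have gi: "g i integrable_on {t0..b}" using gI[of i t0 b] i ab by simp
    show ?thesis using Henstock_Kurzweil_Integration.integral_combine[OF ab gi] .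
  qed
  moreover have "x i b = x i t0 + integral {t0..b} (g i)" using eq[OF i, of b] ab unfolding g_eq by simp
  moreover have "x i a = x i t0 + integral {t0..a} (g i)" using eq[OF i, of a] ab unfolding g_eq by simp
  ultimately show ?thesis by simp
qed

lemma xcont: "i \<in> {1..N} \<Longrightarrow> t0 \<le> b \<Longrightarrow> continuous_on {t0..b} (x i)"
proof -
  assume i: "i \<in> {1..N}" and b: "t0 \<le> b"
  have "continuous_on {t0..b} (\<lambda>t. x i t0 + integral {t0..t} (g i))"
    using gI[OF i order_refl b] by (intro continuous_intros indefinite_integral_continuous_1) simp
  then show ?thesis
  proof (rule continuous_on_eq)
    fix t assume "t \<in> {t0..b}"
    then show "x i t0 + integral {t0..t} (g i) = x i t" using eq[OF i, of t] unfolding g_eq by simp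
  qed
qed

lemma bound:
  assumes i: "i \<in> {1..N}" and "t0 \<le> a" "a \<le> \<tau>" "\<tau> \<le> b"
  shows "\<bar>x i b - x i \<tau>\<bar> \<le> integral {a..b} w"
proof -
  have "\<bar>x i b - x i \<tau>\<bar> = \<bar>integral {\<tau>..b} (g i)\<bar>" using incr[OF i, of \<tau> b] assms by simp
  also have "\<dots> \<le> integral {\<tau>..b} (\<lambda>u. \<bar>g i u\<bar>)"
    using Henstock_Kurzweil_Integration.integral_norm_bound_integral[OF gI[OF i, of \<tau> b] gabsI[OF i, of \<tau> b]] assms
    by auto
  also have "\<dots> \<le> integral {a..b} (\<lambda>u. \<bar>g i u\<bar>)"
    using assms by (intro integral_subset_le gabsI[OF i]) auto
  also have "\<dots> \<le> integral {a..b} w"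
  proof (rule integral_le)
    show "(\<lambda>u. \<bar>g i u\<bar>) integrable_on {a..b}" using assms by (intro gabsI[OF i]) auto
    show "w integrable_on {a..b}" using assms by (intro wI) auto
    fix u show "\<bar>g i u\<bar> \<le> w u" unfolding w_def using i
      by (rule member_le_sum[where f="\<lambda>i. \<bar>g i u\<bar>"]) auto
  qed
  finally show ?thesis .
qed

lemma pointwise:
  assumes dmono: "\<And>u v. u \<le> v \<Longrightarrow> d u \<le> d v" and "\<tau> \<ge> 0"
  shows "(\<Sum>i\<in>{1..N}. d (x i \<tau>) * g i \<tau>) \<le> 0"
  unfolding g_def
proof (rule sym_sum_le)
  show "\<And>i j. i \<in> {1..N} \<Longrightarrow> j \<in> {1..N} \<Longrightarrow> \<alpha> i j \<tau> = \<alpha> j i \<tau> \<and> 0 \<le> \<alpha> i j \<tau>"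
    using sym assms(2) by blast
  fix i j
  show "0 \<le> (d (x i \<tau>) - d (x j \<tau>)) * (sat s (x i \<tau>) - sat s (x j \<tau>))"
  proof (cases "x i \<tau> \<le> x j \<tau>")
    case True
    then show ?thesis using dmono sat_mono[of s] spos by (intro mult_nonpos_nonpos) auto
  next
    case False
    then show ?thesis using dmono sat_mono[of s] spos by (intro mult_nonneg_nonneg) auto
  qed
qed simp

end



context sys begin

lemma onestep:
  assumes dmono: "\<And>u v. u \<le> v \<Longrightarrow> d u \<le> d v" and K: "K \<ge> 0"
    and lip: "\<And>u v. \<bar>d u - d v\<bar> \<le> K * \<bar>u - v\<bar>" and ab: "t0 \<le> a" "a \<le> b"
  shows "(\<Sum>i\<in>{1..N}. d (x i b) * (x i b - x i a)) \<le> K * (integral {a..b} w)\<^sup>2"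
proof -
  define Q where "Q = integral {a..b} w"
  have Q0: "Q \<ge> 0" unfolding Q_def using wI[OF ab] w_nonneg
    by (intro Henstock_Kurzweil_Integration.integral_nonneg) auto
  have "(\<Sum>i\<in>{1..N}. d (x i b) * (x i b - x i a)) = (\<Sum>i\<in>{1..N}. d (x i b) * integral {a..b} (g i))"
    using incr ab by (intro sum.cong refl) auto
  also have "\<dots> = (\<Sum>i\<in>{1..N}. integral {a..b} (\<lambda>\<tau>. d (x i b) * g i \<tau>))"
    using gI ab by (intro sum.cong refl integral_mult) auto
  also have "\<dots> = integral {a..b} (\<lambda>\<tau>. \<Sum>i\<in>{1..N}. d (x i b) * g i \<tau>)"
    using gI ab by (intro Henstock_Kurzweil_Integration.integral_sum[symmetric] integrable_on_mult_right) auto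
  also have "\<dots> \<le> integral {a..b} (\<lambda>\<tau>. K * Q * w \<tau>)"
  proof (rule integral_le)
    show "(\<lambda>\<tau>. \<Sum>i\<in>{1..N}. d (x i b) * g i \<tau>) integrable_on {a..b}"
      using gI ab by (intro Henstock_Kurzweil_Integration.integrable_sum integrable_on_mult_right) auto
    show "(\<lambda>\<tau>. K * Q * w \<tau>) integrable_on {a..b}"
      using wI ab by (intro integrable_on_mult_right) auto
    fix \<tau> assume \<tau>: "\<tau> \<in> {a..b}"
    have "(\<Sum>i\<in>{1..N}. d (x i b) * g i \<tau>) =
          (\<Sum>i\<in>{1..N}. d (x i \<tau>) * g i \<tau>) + (\<Sum>i\<in>{1..N}. (d (x i b) - d (x i \<tau>)) * g i \<tau>)"
      by (simp add: sum.distrib[symmetric] algebra_simps)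
    also have "(\<Sum>i\<in>{1..N}. d (x i \<tau>) * g i \<tau>) \<le> 0"
      using pointwise[of d \<tau>, OF dmono] \<tau> ab t0 by auto
    also have "(\<Sum>i\<in>{1..N}. (d (x i b) - d (x i \<tau>)) * g i \<tau>) \<le> (\<Sum>i\<in>{1..N}. K * Q * \<bar>g i \<tau>\<bar>)"
    proof (rule sum_mono)
      fix i assume i: "i \<in> {1..N}"
      have "(d (x i b) - d (x i \<tau>)) * g i \<tau> \<le> \<bar>d (x i b) - d (x i \<tau>)\<bar> * \<bar>g i \<tau>\<bar>"
        by (metis abs_ge_self abs_mult)
      also have "\<dots> \<le> (K * \<bar>x i b - x i \<tau>\<bar>) * \<bar>g i \<tau>\<bar>"
        using lip by (intro mult_right_mono) auto
      also have "\<dots> \<le> (K * Q) * \<bar>g i \<tau>\<bar>"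
        using bound[OF i ab(1), of \<tau> b] \<tau> K unfolding Q_def
        by (intro mult_right_mono mult_left_mono) auto
      finally show "(d (x i b) - d (x i \<tau>)) * g i \<tau> \<le> K * Q * \<bar>g i \<tau>\<bar>" .
    qed
    also have "(\<Sum>i\<in>{1..N}. K * Q * \<bar>g i \<tau>\<bar>) = K * Q * w \<tau>"
      unfolding w_def by (simp add: sum_distrib_left)
    finally show "(\<Sum>i\<in>{1..N}. d (x i b) * g i \<tau>) \<le> K * Q * w \<tau>" by simp
  qed
  also have "\<dots> = K * Q * Q"
    using wI ab unfolding Q_def by (subst integral_mult[symmetric]) auto
  finally show ?thesis unfolding Q_def by (simp add: power2_eq_square)
qed

lemma mono_phi:
  assumes dmono: "\<And>u v. u \<le> v \<Longrightarrow> d u \<le> d v" and K: "K \<ge> 0"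
    and lip: "\<And>u v. \<bar>d u - d v\<bar> \<le> K * \<bar>u - v\<bar>"
    and conv: "\<And>u v. \<phi> v - \<phi> u \<le> d v * (v - u)"
    and ab: "t0 \<le> a" "a \<le> b"
  shows "(\<Sum>i\<in>{1..N}. \<phi> (x i b)) \<le> (\<Sum>i\<in>{1..N}. \<phi> (x i a))"
proof -
  have wi: "\<And>t. t0 \<le> t \<Longrightarrow> w integrable_on {t0..t}" using wI by auto
  have step: "(\<Sum>i\<in>{1..N}. \<phi> (x i b)) - (\<Sum>i\<in>{1..N}. \<phi> (x i a)) \<le> K * (integral {a..b} w)\<^sup>2"
    if ab: "t0 \<le> a" "a \<le> b" for a b
  proof -
    have "(\<Sum>i\<in>{1..N}. \<phi> (x i b)) - (\<Sum>i\<in>{1..N}. \<phi> (x i a)) = (\<Sum>i\<in>{1..N}. \<phi> (x i b) - \<phi> (x i a))"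
      by (simp add: sum_subtractf)
    also have "\<dots> \<le> (\<Sum>i\<in>{1..N}. d (x i b) * (x i b - x i a))"
      using conv by (intro sum_mono) auto
    also have "\<dots> \<le> K * (integral {a..b} w)\<^sup>2" using onestep[OF dmono K lip ab] .
    finally show ?thesis .
  qed
  show ?thesis using bisect[OF wi w_nonneg K step ab] by simp
qed

end



context sys begin

lemma eps_le:
  fixes A B :: real
  assumes "\<And>\<epsilon>. \<epsilon> > 0 \<Longrightarrow> A \<le> B + real N * \<epsilon> / 2"
  shows "A \<le> B"
proof (rule field_le_epsilon)
  fix e :: real assume e: "0 < e"
  have pe: "2 * e / (real N + 1) > 0" using e by simp
  have "A \<le> B + real N * (2 * e / (real N + 1)) / 2" using assms[OF pe] .
  also have "real N * (2 * e / (real N + 1)) / 2 \<le> e" using e by (simp add: field_simps)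
  finally show "A \<le> B + e" by simp
qed

lemma pos_mono:
  assumes ab: "t0 \<le> a" "a \<le> b"
  shows "(\<Sum>i\<in>{1..N}. max (x i b - c) 0) \<le> (\<Sum>i\<in>{1..N}. max (x i a - c) 0)"
proof (rule eps_le)
  fix \<epsilon> :: real assume e: "\<epsilon> > 0"
  have "(\<Sum>i\<in>{1..N}. max (x i b - c) 0) \<le> (\<Sum>i\<in>{1..N}. hub \<epsilon> (x i b - c) + \<epsilon>/2)"
    using hub_pos[OF e] by (intro sum_mono) auto
  also have "\<dots> = (\<Sum>i\<in>{1..N}. hub \<epsilon> (x i b - c)) + real N * \<epsilon> / 2"
    by (simp add: sum.distrib)
  also have "(\<Sum>i\<in>{1..N}. hub \<epsilon> (x i b - c)) \<le> (\<Sum>i\<in>{1..N}. hub \<epsilon> (x i a - c))"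
  proof (rule mono_phi[where d="\<lambda>z. hd \<epsilon> (z - c)" and K="1/\<epsilon>" and \<phi>="\<lambda>z. hub \<epsilon> (z - c)", OF _ _ _ _ ab])
    show "\<And>u v. u \<le> v \<Longrightarrow> hd \<epsilon> (u - c) \<le> hd \<epsilon> (v - c)" using hd_mono[OF e] by simp
    show "0 \<le> 1 / \<epsilon>" using e by simp
    show "\<And>u v. \<bar>hd \<epsilon> (u - c) - hd \<epsilon> (v - c)\<bar> \<le> 1 / \<epsilon> * \<bar>u - v\<bar>"
      using hd_lip[OF e] by (metis diff_diff_eq2 diff_add_cancel add_diff_cancel_right)
    show "\<And>u v. hub \<epsilon> (v - c) - hub \<epsilon> (u - c) \<le> hd \<epsilon> (v - c) * (v - u)"
      using hub_conv[OF e] by (metis diff_diff_eq2 diff_add_cancel add_diff_cancel_right)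
  qed
  also have "(\<Sum>i\<in>{1..N}. hub \<epsilon> (x i a - c)) \<le> (\<Sum>i\<in>{1..N}. max (x i a - c) 0)"
    using hub_pos[OF e] by (intro sum_mono) auto
  finally show "(\<Sum>i\<in>{1..N}. max (x i b - c) 0) \<le> (\<Sum>i\<in>{1..N}. max (x i a - c) 0) + real N * \<epsilon> / 2"
    by simp
qed

lemma neg_mono:
  assumes ab: "t0 \<le> a" "a \<le> b"
  shows "(\<Sum>i\<in>{1..N}. max (c - x i b) 0) \<le> (\<Sum>i\<in>{1..N}. max (c - x i a) 0)"
proof (rule eps_le)
  fix \<epsilon> :: real assume e: "\<epsilon> > 0"
  have "(\<Sum>i\<in>{1..N}. max (c - x i b) 0) \<le> (\<Sum>i\<in>{1..N}. hub \<epsilon> (c - x i b) + \<epsilon>/2)"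
    using hub_pos[OF e] by (intro sum_mono) auto
  also have "\<dots> = (\<Sum>i\<in>{1..N}. hub \<epsilon> (c - x i b)) + real N * \<epsilon> / 2"
    by (simp add: sum.distrib)
  also have "(\<Sum>i\<in>{1..N}. hub \<epsilon> (c - x i b)) \<le> (\<Sum>i\<in>{1..N}. hub \<epsilon> (c - x i a))"
  proof (rule mono_phi[where d="\<lambda>z. - hd \<epsilon> (c - z)" and K="1/\<epsilon>" and \<phi>="\<lambda>z. hub \<epsilon> (c - z)", OF _ _ _ _ ab])
    show "\<And>u v. u \<le> v \<Longrightarrow> - hd \<epsilon> (c - u) \<le> - hd \<epsilon> (c - v)" using hd_mono[OF e] by simp
    show "0 \<le> 1 / \<epsilon>" using e by simp
    fix u v
    have "\<bar>hd \<epsilon> (c - v) - hd \<epsilon> (c - u)\<bar> \<le> 1 / \<epsilon> * \<bar>(c - v) - (c - u)\<bar>" using hd_lip[OF e] .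
    then show "\<bar>- hd \<epsilon> (c - u) - - hd \<epsilon> (c - v)\<bar> \<le> 1 / \<epsilon> * \<bar>u - v\<bar>" by (simp add: abs_minus_commute)
    have "hub \<epsilon> (c - v) - hub \<epsilon> (c - u) \<le> hd \<epsilon> (c - v) * ((c - v) - (c - u))" using hub_conv[OF e] .
    then show "hub \<epsilon> (c - v) - hub \<epsilon> (c - u) \<le> - hd \<epsilon> (c - v) * (v - u)" by (simp add: algebra_simps)
  qed
  also have "(\<Sum>i\<in>{1..N}. hub \<epsilon> (c - x i a)) \<le> (\<Sum>i\<in>{1..N}. max (c - x i a) 0)"
    using hub_pos[OF e] by (intro sum_mono) auto
  finally show "(\<Sum>i\<in>{1..N}. max (c - x i b) 0) \<le> (\<Sum>i\<in>{1..N}. max (c - x i a) 0) + real N * \<epsilon> / 2"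
    by simp
qed

end



lemma sd: "(h::real) > 0 \<Longrightarrow> 0 \<le> max (z - (c - h)) 0 + max (z - (c + h)) 0 - 2 * max (z - c) 0"
  by (auto simp: max_def)

context sys begin

lemma upper:
  assumes N: "N \<ge> 1" and i: "i \<in> {1..N}" and t: "t \<ge> t0"
  shows "x i t \<le> Max ((\<lambda>j. x j t0) ` {1..N})"
proof -
  define M0 where "M0 = Max ((\<lambda>j. x j t0) ` {1..N})"
  have "\<forall>j\<in>{1..N}. x j t0 \<le> M0" unfolding M0_def by (intro ballI Max_ge) auto
  then have z: "(\<Sum>j\<in>{1..N}. max (x j t0 - M0) 0) = 0" by (intro sum.neutral) auto
  have "max (x i t - M0) 0 \<le> (\<Sum>j\<in>{1..N}. max (x j t - M0) 0)"
    using i by (intro member_le_sum) auto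
  also have "\<dots> \<le> (\<Sum>j\<in>{1..N}. max (x j t0 - M0) 0)" using pos_mono[OF order_refl t] .
  finally show ?thesis using z unfolding M0_def by simp
qed

lemma lower:
  assumes N: "N \<ge> 1" and i: "i \<in> {1..N}" and t: "t \<ge> t0"
  shows "Min ((\<lambda>j. x j t0) ` {1..N}) \<le> x i t"
proof -
  define m0 where "m0 = Min ((\<lambda>j. x j t0) ` {1..N})"
  have "\<forall>j\<in>{1..N}. m0 \<le> x j t0" unfolding m0_def by (intro ballI Min_le) auto
  then have z: "(\<Sum>j\<in>{1..N}. max (m0 - x j t0) 0) = 0" by (intro sum.neutral) auto
  have "max (m0 - x i t) 0 \<le> (\<Sum>j\<in>{1..N}. max (m0 - x j t) 0)"
    using i by (intro member_le_sum) auto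
  also have "\<dots> \<le> (\<Sum>j\<in>{1..N}. max (m0 - x j t0) 0)" using neg_mono[OF order_refl t] .
  finally show ?thesis using z unfolding m0_def by simp
qed

lemma nosc:
  assumes i: "i \<in> {1..N}" and pq: "p < q"
    and fp: "\<forall>T. \<exists>t\<ge>T. x i t < p" and fq: "\<forall>T. \<exists>t\<ge>T. x i t > q"
  shows False
proof -
  define P where "P c t = (\<Sum>j\<in>{1..N}. max (x j t - c) 0)" for c t
  have "\<exists>L. (P c \<longlongrightarrow> L) at_top" for c
  proof (rule mono_conv)
    show "\<And>a b. t0 \<le> a \<Longrightarrow> a \<le> b \<Longrightarrow> P c b \<le> P c a" unfolding P_def by (rule pos_mono)
    show "\<And>t. t0 \<le> t \<Longrightarrow> 0 \<le> P c t" unfolding P_def by (intro sum_nonneg) auto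
  qed
  then obtain L where L: "\<And>c. (P c \<longlongrightarrow> L c) at_top" by metis
  define h where "h = (q - p) / (real N + 2)"
  have h0: "h > 0" using pq unfolding h_def by simp
  have hq: "h * (real N + 2) = q - p" unfolding h_def by simp
  define cc where "cc k = p + real k * h" for k :: nat
  define E where "E k = L (cc (Suc k)) - L (cc k)" for k
  have Pmono: "P c' t \<le> P c t" if "c \<le> c'" for c c' t
    unfolding P_def using that by (intro sum_mono) auto
  have Lmono: "L c' \<le> L c" if "c \<le> c'" for c c'
    by (rule tendsto_le[OF trivial_limit_at_top_linorder L L]) (use Pmono that in auto)
  have E1: "E (Suc N) \<le> 0" unfolding E_def cc_def using h0 by (auto intro!: Lmono)
  have P01: "P (cc 0) t \<le> P (cc 1) t + real N * h" for t
  proof -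
    have "P (cc 0) t \<le> (\<Sum>j\<in>{1..N}. max (x j t - cc 1) 0 + h)"
      unfolding P_def cc_def using h0 by (intro sum_mono) auto
    also have "\<dots> = P (cc 1) t + real N * h" unfolding P_def by (simp add: sum.distrib)
    finally show ?thesis .
  qed
  have "L (cc 0) \<le> L (cc 1) + real N * h"
    by (rule tendsto_le[OF trivial_limit_at_top_linorder tendsto_add[OF L tendsto_const] L])
       (use P01 in auto)
  then have E0: "- E 0 \<le> real N * h" unfolding E_def by simp
  have tel: "(\<Sum>k=0..N. E (Suc k) - E k) = E (Suc N) - E 0" by (rule sum_Suc_diff) simp
  have "\<exists>k\<le>N. E (Suc k) - E k < h"
  proof (rule ccontr)
    assume "\<not> (\<exists>k\<le>N. E (Suc k) - E k < h)"
    then have all: "\<forall>k\<le>N. h \<le> E (Suc k) - E k" by (auto simp: not_less)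
    have "(\<Sum>k=0..N. h) \<le> (\<Sum>k=0..N. E (Suc k) - E k)" using all by (intro sum_mono) auto
    then have "(real N + 1) * h \<le> E (Suc N) - E 0" using tel by (simp add: add.commute)
    then show False using E0 E1 h0 by (simp add: algebra_simps)
  qed
  then obtain k where k: "k \<le> N" "E (Suc k) - E k < h" by blast
  define c where "c = cc (Suc k)"
  have cl: "cc k = c - h" "cc (Suc (Suc k)) = c + h" unfolding c_def cc_def by (simp_all add: algebra_simps)
  have cp: "p < c" unfolding c_def cc_def using h0 by simp
  have "real (Suc k) * h < (real N + 2) * h" using k(1) h0 by (intro mult_strict_right_mono) auto
  then have cq: "c < q" unfolding c_def cc_def using hq by (simp add: algebra_simps)
  define D where "D t = P (c - h) t + P (c + h) t - 2 * P c t" for t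
  have "(D \<longlongrightarrow> L (c - h) + L (c + h) - 2 * L c) at_top"
    unfolding D_def by (intro tendsto_intros L)
  moreover have "L (c - h) + L (c + h) - 2 * L c = E (Suc k) - E k"
    unfolding E_def using cl by (simp add: c_def)
  ultimately have "eventually (\<lambda>t. D t < h) at_top" using k(2) by (auto intro: order_tendstoD)
  then obtain T where T: "\<And>t. t \<ge> T \<Longrightarrow> D t < h" unfolding eventually_at_top_linorder by blast
  obtain t1 where t1: "t1 \<ge> max T t0" "x i t1 < p" using fp by blast
  obtain t2 where t2: "t2 \<ge> t1" "x i t2 > q" using fq by blast
  have t02: "t0 \<le> t2" using t1 t2 by simp
  have "continuous_on {t1..t2} (x i)"
    using t1 by (intro continuous_on_subset[OF xcont[OF i t02]]) auto
  then obtain t where t: "t \<ge> t1" "t \<le> t2" "x i t = c"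
    using IVT'[of "x i" t1 c t2] t1 t2 cp cq by auto
  have "D t = (\<Sum>j\<in>{1..N}. max (x j t - (c - h)) 0 + max (x j t - (c + h)) 0 - 2 * max (x j t - c) 0)"
    unfolding D_def P_def by (simp add: sum.distrib sum_subtractf sum_distrib_left)
  also have "\<dots> \<ge> max (x i t - (c - h)) 0 + max (x i t - (c + h)) 0 - 2 * max (x i t - c) 0"
    using i sd[OF h0] by (intro member_le_sum) auto
  finally have "D t \<ge> h" using t(3) h0 by simp
  moreover have "D t < h" using T t t1 by simp
  ultimately show False by simp
qed

lemma main:
  assumes N: "N \<ge> 1"
  shows "\<forall>i\<in>{1..N}. \<exists>xs. (x i \<longlongrightarrow> xs) at_top \<and>
           Min ((\<lambda>j. x j t0) ` {1..N}) \<le> xs \<and> xs \<le> Max ((\<lambda>j. x j t0) ` {1..N})"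
proof
  fix i assume i: "i \<in> {1..N}"
  have bnd: "\<And>t. t \<ge> t0 \<Longrightarrow> Min ((\<lambda>j. x j t0) ` {1..N}) \<le> x i t \<and> x i t \<le> Max ((\<lambda>j. x j t0) ` {1..N})"
    using upper[OF N i] lower[OF N i] by auto
  have no: "\<And>p q. p < q \<Longrightarrow> (\<forall>T. \<exists>t\<ge>T. x i t < p) \<Longrightarrow> (\<forall>T. \<exists>t\<ge>T. x i t > q) \<Longrightarrow> False"
    using nosc[OF i] by blast
  have "\<exists>l. (x i \<longlongrightarrow> l) at_top"
    apply (rule conv_crit[where f="x i"])
     apply (erule bnd)
    apply (erule (2) no)
    done
  then obtain l where l: "(x i \<longlongrightarrow> l) at_top" by blast
  have ev: "eventually (\<lambda>t. Min ((\<lambda>j. x j t0) ` {1..N}) \<le> x i t \<and> x i t \<le> Max ((\<lambda>j. x j t0) ` {1..N})) at_top"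
    unfolding eventually_at_top_linorder using bnd by blast
  have "Min ((\<lambda>j. x j t0) ` {1..N}) \<le> l"
    by (rule tendsto_lowerbound[OF l]) (use ev in \<open>auto elim: eventually_mono\<close>)
  moreover have "l \<le> Max ((\<lambda>j. x j t0) ` {1..N})"
    by (rule tendsto_upperbound[OF l]) (use ev in \<open>auto elim: eventually_mono\<close>)
  ultimately show "\<exists>xs. (x i \<longlongrightarrow> xs) at_top \<and>
           Min ((\<lambda>j. x j t0) ` {1..N}) \<le> xs \<and> xs \<le> Max ((\<lambda>j. x j t0) ` {1..N})"
    using l by blast
qed

end


theorem lemma5:
  fixes N :: nat and s t0 :: real
    and \<alpha> :: "nat \<Rightarrow> nat \<Rightarrow> real \<Rightarrow> real"
    and x :: "nat \<Rightarrow> real \<Rightarrow> real"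
  assumes "N \<ge> 1" and "s > 0" and "t0 \<ge> 0"
    and sym: "\<forall>i\<in>{1..N}. \<forall>j\<in>{1..N}. \<forall>t\<ge>0. \<alpha> i j t = \<alpha> j i t \<and> \<alpha> i j t \<ge> 0"
    and cont: "\<forall>i\<in>{1..N}. \<forall>j\<in>{1..N}. \<exists>Z. Z \<in> null_sets lborel \<and>
                 (\<forall>t\<in>{0..} - Z. continuous (at t within {0..}) (\<alpha> i j))"
    and sol: "\<forall>i\<in>{1..N}. \<forall>t\<ge>t0.
       set_integrable lborel {t0..t}
         (\<lambda>\<tau>. \<Sum>j=1..N. \<alpha> i j \<tau> * (sat s (x j \<tau>) - sat s (x i \<tau>))) \<and>
       x i t = x i t0 +
         (LINT \<tau>:{t0..t}|lborel. (\<Sum>j=1..N. \<alpha> i j \<tau> * (sat s (x j \<tau>) - sat s (x i \<tau>))))"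
  shows "\<forall>i\<in>{1..N}. \<exists>xs. (x i \<longlongrightarrow> xs) at_top \<and>
           Min ((\<lambda>j. x j t0) ` {1..N}) \<le> xs \<and> xs \<le> Max ((\<lambda>j. x j t0) ` {1..N})"
proof -
  interpret sys N s t0 \<alpha> x
  proof
    show "s > 0" "t0 \<ge> 0" by fact+
    show "\<And>i j t. i \<in> {1..N} \<Longrightarrow> j \<in> {1..N} \<Longrightarrow> t \<ge> 0 \<Longrightarrow> \<alpha> i j t = \<alpha> j i t \<and> \<alpha> i j t \<ge> 0"
      using sym by blast
    fix i t assume i: "i \<in> {1..N}" and t: "t \<ge> t0"
    have si: "set_integrable lborel {t0..t}
         (\<lambda>\<tau>. \<Sum>j=1..N. \<alpha> i j \<tau> * (sat s (x j \<tau>) - sat s (x i \<tau>)))"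
      using sol i t by blast
    show "(\<lambda>\<tau>. \<Sum>j=1..N. \<alpha> i j \<tau> * (sat s (x j \<tau>) - sat s (x i \<tau>))) absolutely_integrable_on {t0..t}"
      using lborel_to_HK(1)[OF si] .
    have "x i t = x i t0 +
         (LINT \<tau>:{t0..t}|lborel. (\<Sum>j=1..N. \<alpha> i j \<tau> * (sat s (x j \<tau>) - sat s (x i \<tau>))))"
      using sol i t by blast
    then show "x i t = x i t0 + integral {t0..t} (\<lambda>\<tau>. \<Sum>j=1..N. \<alpha> i j \<tau> * (sat s (x j \<tau>) - sat s (x i \<tau>)))"
      using lborel_to_HK(2)[OF si] by simp
  qed
  show ?thesis using main assms(1) by blast
qed

end
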